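(* For every backward trie $\mathsf{T}_b$ with $n$ nodes, over any alphabet, $\mathsf{DAWG}(\mathsf{T}_b)$ has $O(n^2)$ nodes and $O(n^2)$ edges. Moreover, there exist backward tries $\mathsf{T}_b$ with $n$ nodes, for arbitrarily large $n$ and over an alphabet of constant size, such that $\mathsf{DAWG}(\mathsf{T}_b)$ has $\Omega(n^2)$ nodes and $\Omega(n^2)$ edges.
   Context: An alphabet $\Sigma$ is a finite ordered set of characters. A forward trie $\mathsf{T}_f$ is a rooted tree with $n$ nodes in which every edge is directed from parent to child and labeled by a single character of $\Sigma$, such that the edges leaving any node carry pairwise distinct labels. The backward trie $\mathsf{T}_b$ is obtained from $\mathsf{T}_f$ by reversing the direction of every edge while keeping its label; it has the same nodes and root $r$. For nodes $u,v$ with $u$ an ancestor of $v$ (possibly $u=v$), $\mathrm{str}_b(v,u)$ is the string of labels read along the reversed (upward) path from $v$ to $u$. Define $\mathrm{Substr}(\mathsf{T}_b)=\{\mathrm{str}_b(v,u): u \text{ an ancestor of } v\}$. A string $Y\in\mathrm{Substr}(\mathsf{T}_b)$ is left-maximal on $\mathsf{T}_b$ if either there are distinct characters $a\ne b$ with $aY,bY\in\mathrm{Substr}(\mathsf{T}_b)$, or $Y=\mathrm{str}_b(\ell,u)$ for some leaf $\ell$ and some ancestor $u$ of $\ell$. For $Y\in\mathrm{Substr}(\mathsf{T}_b)$ let $\mathrm{lmx}_b(Y)$ be the shortest left-maximal string on $\mathsf{T}_b$ of the form $\gamma Y$ with $\gamma\in\Sigma^*$. Two substrings $Y,Y'$ are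 equivalent iff $\mathrm{lmx}_b(Y)=\mathrm{lmx}_b(Y')$; let $[Y]$ denote the class of $Y$. $\mathsf{DAWG}(\mathsf{T}_b)$ is the deterministic edge-labeled directed graph whose nodes are the classes $[Y]$, $Y\in\mathrm{Substr}(\mathsf{T}_b)$, with an edge labeled $a\in\Sigma$ from $[Y]$ to $[Ya]$ whenever $Y,Ya\in\mathrm{Substr}(\mathsf{T}_b)$. *)

theory Defs
  imports Complex_Main
begin

text \<open>A (forward) trie over the alphabet of character codes nat is represented
  by the set of its nodes, each node identified with the label string of the path
  from the root to it.  Such a set is finite, contains the root [] and is
  prefix-closed; conversely every trie arises this way (siblings carry distinct
  labels).  A node u is an ancestor of v iff
  v = u @ x, and then str_b(v,u) = rev x.\<close>

definition trie :: "nat list set \<Rightarrow> bool" where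
  "trie T \<longleftrightarrow> finite T \<and> [] \<in> T \<and> (\<forall>w a. w @ [a] \<in> T \<longrightarrow> w \<in> T)"

definition Substr_b :: "nat list set \<Rightarrow> nat list set" where
  "Substr_b T = {rev x | u x. u @ x \<in> T}"

definition is_leaf :: "nat list set \<Rightarrow> nat list \<Rightarrow> bool" where
  "is_leaf T l \<longleftrightarrow> l \<in> T \<and> (\<forall>a. l @ [a] \<notin> T)"

definition left_maximal_b :: "nat list set \<Rightarrow> nat list \<Rightarrow> bool" where
  "left_maximal_b T Y \<longleftrightarrow> Y \<in> Substr_b T \<and>
     ((\<exists>a b. a \<noteq> b \<and> a # Y \<in> Substr_b T \<and> b # Y \<in> Substr_b T) \<or>
      (\<exists>l u x. is_leaf T l \<and> l = u @ x \<and> Y = rev x))"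

definition lmx_b :: "nat list set \<Rightarrow> nat list \<Rightarrow> nat list" where
  "lmx_b T Y = arg_min length (\<lambda>Z. left_maximal_b T Z \<and> (\<exists>g. Z = g @ Y))"

definition eq_class_b :: "nat list set \<Rightarrow> nat list \<Rightarrow> nat list set" where
  "eq_class_b T Y = {Y' \<in> Substr_b T. lmx_b T Y' = lmx_b T Y}"

definition dawg_nodes :: "nat list set \<Rightarrow> nat list set set" where
  "dawg_nodes T = eq_class_b T ` Substr_b T"

definition dawg_edges :: "nat list set \<Rightarrow> (nat list set \<times> nat \<times> nat list set) set" where
  "dawg_edges T = {(eq_class_b T Y, a, eq_class_b T (Y @ [a])) | Y a.
                     Y \<in> Substr_b T \<and> Y @ [a] \<in> Substr_b T}"

end

theory Submission
  imports Defs
begin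

lemma trie_prefix: "trie T \<Longrightarrow> w @ v \<in> T \<Longrightarrow> w \<in> T"
proof (induction v rule: rev_induct)
  case Nil then show ?case by simp
next
  case (snoc x xs) then show ?case unfolding trie_def by (metis append_assoc)
qed

lemma length_le_card: assumes "trie T" "w \<in> T" shows "length w + 1 \<le> card T"
proof -
  have sub: "(\<lambda>k. take k w) ` {0..length w} \<subseteq> T"
    using trie_prefix[OF assms(1)] assms(2) by (auto, metis append_take_drop_id)
  have inj: "inj_on (\<lambda>k. take k w) {0..length w}"
    by (rule inj_onI) (metis atLeastAtMost_iff length_take min.absorb2)
  have "card ((\<lambda>k. take k w) ` {0..length w}) = length w + 1"
    using card_image[OF inj] by simp
  moreover have "finite T" using assms(1) trie_def by blast
  ultimately show ?thesis using card_mono[OF _ sub] by simp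
qed

lemma Substr_sub: "Substr_b T \<subseteq> (\<Union>w\<in>T. (\<lambda>k. rev (drop k w)) ` {0..length w})"
proof
  fix Y assume "Y \<in> Substr_b T"
  then obtain u x where "Y = rev x" "u @ x \<in> T" unfolding Substr_b_def by blast
  then show "Y \<in> (\<Union>w\<in>T. (\<lambda>k. rev (drop k w)) ` {0..length w})"
    by (intro UN_I[of "u@x"]) (auto intro!: image_eqI[of _ _ "length u"])
qed

lemma Substr_card: assumes "trie T" shows "finite (Substr_b T) \<and> card (Substr_b T) \<le> (card T)^2"
proof -
  have fT: "finite T" using assms trie_def by blast
  have f: "finite (\<Union>w\<in>T. (\<lambda>k. rev (drop k w)) ` {0..length w})" using fT by auto
  have "card (Substr_b T) \<le> card (\<Union>w\<in>T. (\<lambda>k. rev (drop k w)) ` {0..length w})"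
    by (rule card_mono[OF f Substr_sub])
  also have "\<dots> \<le> (\<Sum>w\<in>T. card ((\<lambda>k. rev (drop k w)) ` {0..length w}))"
    by (rule card_UN_le[OF fT])
  also have "\<dots> \<le> (\<Sum>w\<in>T. card T)"
  proof (rule sum_mono)
    fix w assume "w \<in> T"
    have "card ((\<lambda>k. rev (drop k w)) ` {0..length w}) \<le> card {0..length w}" by (rule card_image_le) simp
    then show "card ((\<lambda>k. rev (drop k w)) ` {0..length w}) \<le> card T"
      using length_le_card[OF assms \<open>w\<in>T\<close>] by simp
  qed
  also have "\<dots> = (card T)^2" by (simp add: power2_eq_square)
  finally show ?thesis using finite_subset[OF Substr_sub f] by simp
qed

lemma edges_sub: "dawg_edges T \<subseteq> (\<lambda>Z. (eq_class_b T (butlast Z), last Z, eq_class_b T Z)) ` Substr_b T"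
  unfolding dawg_edges_def by (auto intro!: image_eqI)

lemma upper: "trie T \<Longrightarrow> card (dawg_nodes T) \<le> 1 * (card T)^2 \<and> card (dawg_edges T) \<le> 1 * (card T)^2"
proof -
  assume t: "trie T"
  note S = Substr_card[OF t]
  have "card (dawg_nodes T) \<le> card (Substr_b T)" unfolding dawg_nodes_def by (rule card_image_le) (use S in blast)
  moreover have "card (dawg_edges T) \<le> card (Substr_b T)"
    using card_mono[OF _ edges_sub] card_image_le S by (meson finite_imageI le_trans)
  ultimately show ?thesis using S by simp
qed

lemma SubstrI: "u @ x \<in> T \<Longrightarrow> rev x \<in> Substr_b T" unfolding Substr_b_def by blast

definition ww :: "nat \<Rightarrow> nat \<Rightarrow> nat list" where
  "ww k i = replicate k 0 @ replicate i 1 @ [2]"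

definition TT :: "nat \<Rightarrow> nat list set" where
  "TT k = {v. \<exists>i\<le>k. \<exists>r. v @ r = ww k i}"

lemma TT_sub: "TT k \<subseteq> (\<lambda>p. replicate p 0) ` {0..k} \<union> (\<lambda>p. replicate k 0 @ replicate p 1) ` {0..k} \<union> ww k ` {0..k}"
proof
  fix v assume "v \<in> TT k"
  then obtain i r where i: "i \<le> k" "v @ r = ww k i" unfolding TT_def by blast
  define p where "p = length v"
  have v: "v = take p (ww k i)" unfolding p_def i(2)[symmetric] by simp
  have "length v + length r = length (ww k i)" using i(2) by (metis length_append)
  then have pl: "p \<le> k + i + 1" using p_def by (simp add: ww_def)
  show "v \<in> (\<lambda>p. replicate p 0) ` {0..k} \<union> (\<lambda>p. replicate k 0 @ replicate p 1) ` {0..k} \<union> ww k ` {0..k}"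
  proof (cases "p \<le> k")
    case True
    then have "v = replicate p 0" using v by (simp add: ww_def)
    moreover have "p \<in> {0..k}" using True by simp
    ultimately have "v \<in> (\<lambda>p. replicate p 0) ` {0..k}" by (rule_tac rev_image_eqI)
    then show ?thesis by (rule UnI1[OF UnI1])
  next
    case F: False
    show ?thesis
    proof (cases "p \<le> k + i")
      case True
      have "v = replicate k 0 @ replicate (p - k) 1" using v F True by (simp add: ww_def)
      moreover have "p - k \<in> {0..k}" using True i by simp
      ultimately have "v \<in> (\<lambda>p. replicate k 0 @ replicate p 1) ` {0..k}" by (rule_tac rev_image_eqI)
      then show ?thesis by (rule UnI1[OF UnI2])
    next
      case False
      then have "v = ww k i" using v pl by (simp add: ww_def)
      moreover have "i \<in> {0..k}" using i by simp
      ultimately have "v \<in> ww k ` {0..k}" by (rule_tac rev_image_eqI)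
      then show ?thesis by (rule UnI2)
    qed
  qed
qed

lemma ww_in: "i \<le> k \<Longrightarrow> ww k i \<in> TT k" unfolding TT_def by blast

lemma TT_trie: "trie (TT k)"
  unfolding trie_def
proof (intro conjI allI impI)
  show "finite (TT k)" using finite_subset[OF TT_sub] by blast
  have "[] @ ww k 0 = ww k 0" by simp
  then show "[] \<in> TT k" unfolding TT_def by blast
  fix w a assume "w @ [a] \<in> TT k"
  then obtain i r where "i \<le> k" "(w @ [a]) @ r = ww k i" unfolding TT_def by blast
  then have "i \<le> k" "w @ ([a] @ r) = ww k i" by simp_all
  then show "w \<in> TT k" unfolding TT_def by blast
qed

lemma card_Un3: "card (A \<union> B \<union> C) \<le> card A + card B + card C"
proof -
  have "card (A \<union> B \<union> C) \<le> card (A \<union> B) + card C" by (rule card_Un_le)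
  moreover have "card (A \<union> B) \<le> card A + card B" by (rule card_Un_le)
  ultimately show ?thesis by linarith
qed

lemma TT_card: "k + 1 \<le> card (TT k) \<and> card (TT k) \<le> 3 * (k + 1)"
proof
  have inj: "inj_on (ww k) {0..k}" by (rule inj_onI) (simp add: ww_def)
  have fT: "finite (TT k)" using TT_trie unfolding trie_def by blast
  have "ww k ` {0..k} \<subseteq> TT k" by (rule image_subsetI) (rule ww_in, simp)
  then have "card (ww k ` {0..k}) \<le> card (TT k)" by (rule card_mono[OF fT])
  then show "k + 1 \<le> card (TT k)" using card_image[OF inj] by simp
  have "card (TT k) \<le> card ((\<lambda>p. replicate p 0) ` {0..k} \<union> (\<lambda>p. replicate k 0 @ replicate p 1) ` {0..k} \<union> ww k ` {0..k})"
    by (rule card_mono[OF _ TT_sub]) auto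
  also have "\<dots> \<le> card ((\<lambda>p. replicate p (0::nat)) ` {0..k}) + card ((\<lambda>p. replicate k (0::nat) @ replicate p 1) ` {0..k}) + card (ww k ` {0..k})"
    by (rule card_Un3)
  also have "\<dots> \<le> (k+1) + (k+1) + (k+1)"
    by (intro add_mono order_trans[OF card_image_le]) simp_all
  finally show "card (TT k) \<le> 3 * (k + 1)" by simp
qed

lemma ww_leaf: "i \<le> k \<Longrightarrow> is_leaf (TT k) (ww k i)"
  unfolding is_leaf_def
proof (intro conjI allI)
  assume "i \<le> k" then show "ww k i \<in> TT k" by (rule ww_in)
  fix a show "ww k i @ [a] \<notin> TT k"
  proof
    assume "ww k i @ [a] \<in> TT k"
    then obtain j r where "ww k i @ [a] @ r = ww k j" unfolding TT_def by auto
    then have c: "count_list (ww k i @ [a] @ r) 2 = 1" and l: "last (ww k i @ [a] @ r) = 2"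
      by (simp_all add: ww_def)
    have "count_list ([a] @ r) 2 = 0" using c by (simp add: ww_def)
    moreover have "2 \<in> set ([a] @ r)" using l by (metis last_appendR last_in_set append_is_Nil_conv not_Cons_self2 append_Cons append_Nil)
    ultimately show False by (metis count_list_0_iff)
  qed
qed

lemma lmx_lm: assumes "left_maximal_b T Y" shows "lmx_b T Y = Y"
proof -
  let ?P = "\<lambda>Z. left_maximal_b T Z \<and> (\<exists>g. Z = g @ Y)"
  have "?P Y" using assms by auto
  have A: "?P (lmx_b T Y)" and B: "\<forall>y. ?P y \<longrightarrow> length (lmx_b T Y) \<le> length y"
    unfolding lmx_b_def using arg_min_nat_lemma[of ?P Y length] \<open>?P Y\<close> by blast+
  have "length (lmx_b T Y) \<le> length Y" using B \<open>?P Y\<close> by blast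
  moreover obtain g where "lmx_b T Y = g @ Y" using A by blast
  ultimately show ?thesis by simp
qed

lemma class_inj: "inj_on (eq_class_b T) {Y. left_maximal_b T Y}"
proof (rule inj_onI)
  fix Y1 Y2 assume a: "Y1 \<in> {Y. left_maximal_b T Y}" "Y2 \<in> {Y. left_maximal_b T Y}" "eq_class_b T Y1 = eq_class_b T Y2"
  have "Y1 \<in> eq_class_b T Y1" using a(1) unfolding eq_class_b_def left_maximal_b_def by auto
  then have "lmx_b T Y1 = lmx_b T Y2" using a(3) unfolding eq_class_b_def by auto
  then show "Y1 = Y2" using lmx_lm a(1,2) by simp
qed

lemma count_rep: "count_list (replicate j x) x = j" by (induction j) auto
lemma count_rep2: "x \<noteq> y \<Longrightarrow> count_list (replicate j x) y = 0" by (induction j) auto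

definition SS :: "nat \<Rightarrow> nat list set" where
  "SS k = (\<lambda>(j,i). rev (replicate j 0 @ replicate i 1 @ [2])) ` ({0..k} \<times> {0..k})"

lemma cnt0: "count_list (rev (replicate j 0 @ replicate i 1 @ [2::nat])) 0 = j" by (simp add: count_rep count_rep2)
lemma cnt1: "count_list (rev (replicate j 0 @ replicate i 1 @ [2::nat])) 1 = i" by (simp add: count_rep count_rep2)

lemma SS_card: "card (SS k) = (k+1)^2"
proof -
  have "inj_on (\<lambda>(j,i). rev (replicate j 0 @ replicate i 1 @ [2::nat])) ({0..k} \<times> {0..k})"
  proof (rule inj_onI)
    fix x y assume "x \<in> {0..k} \<times> {0..k}" "y \<in> {0..k} \<times> {0..k}"
      and e: "(\<lambda>(j,i). rev (replicate j 0 @ replicate i 1 @ [2::nat])) x = (\<lambda>(j,i). rev (replicate j 0 @ replicate i 1 @ [2::nat])) y"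
    obtain j i j' i' where xy: "x = (j,i)" "y = (j',i')" by force
    have e': "rev (replicate j 0 @ replicate i 1 @ [2::nat]) = rev (replicate j' 0 @ replicate i' 1 @ [2::nat])"
      using e xy by simp
    have "j = j'" using cnt0[of j i] cnt0[of j' i'] e' by metis
    moreover have "i = i'" using cnt1[of j i] cnt1[of j' i'] e' by metis
    ultimately show "x = y" using xy by simp
  qed
  then show ?thesis unfolding SS_def by (simp add: card_image power2_eq_square)
qed


lemma SS_lm: "Y \<in> SS k \<Longrightarrow> left_maximal_b (TT k) Y"
proof -
  assume "Y \<in> SS k"
  then obtain j i where ji: "j \<le> k" "i \<le> k" "Y = rev (replicate j 0 @ replicate i 1 @ [2])"
    unfolding SS_def by auto
  have l: "ww k i = replicate (k - j) 0 @ (replicate j 0 @ replicate i 1 @ [2])"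
    using ji by (simp add: ww_def replicate_add[symmetric])
  have "Y \<in> Substr_b (TT k)" using SubstrI[OF ww_in[OF ji(2), unfolded l]] ji(3) by simp
  moreover have "\<exists>l u x. is_leaf (TT k) l \<and> l = u @ x \<and> Y = rev x"
    apply (rule exI[of _ "ww k i"], rule exI[of _ "replicate (k - j) 0"], rule exI[of _ "replicate j 0 @ replicate i 1 @ [2]"])
    using ww_leaf[OF ji(2)] l ji(3) by simp
  ultimately show ?thesis unfolding left_maximal_b_def by blast
qed

lemma butlast_Substr: "Y \<in> Substr_b T \<Longrightarrow> Y \<noteq> [] \<Longrightarrow> butlast Y \<in> Substr_b T"
proof -
  assume "Y \<in> Substr_b T" "Y \<noteq> []"
  then obtain u x where "Y = rev x" "u @ x \<in> T" unfolding Substr_b_def by blast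
  moreover obtain h t where "x = h # t" using \<open>Y \<noteq> []\<close> \<open>Y = rev x\<close> by (cases x) auto
  ultimately have "butlast Y = rev t" "(u @ [h]) @ t \<in> T" by auto
  then show ?thesis using SubstrI by metis
qed

lemma lower: "k \<ge> 1 \<Longrightarrow> real (card (dawg_nodes (TT k))) \<ge> 1/16 * real (card (TT k))^2 \<and>
   real (card (dawg_edges (TT k))) \<ge> 1/16 * real (card (TT k))^2"
proof -
  let ?T = "TT k"
  have fS: "finite (Substr_b ?T)" using Substr_card[OF TT_trie] by blast
  have lm: "\<And>Y. Y \<in> SS k \<Longrightarrow> left_maximal_b ?T Y" by (rule SS_lm)
  have sub: "SS k \<subseteq> Substr_b ?T" using lm unfolding left_maximal_b_def by blast
  have injS: "inj_on (eq_class_b ?T) (SS k)"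
    by (rule inj_on_subset[OF class_inj]) (use lm in blast)
  have fN: "finite (dawg_nodes ?T)" unfolding dawg_nodes_def using fS by (rule finite_imageI)
  have "eq_class_b ?T ` SS k \<subseteq> dawg_nodes ?T" unfolding dawg_nodes_def using sub by (rule image_mono)
  then have "card (eq_class_b ?T ` SS k) \<le> card (dawg_nodes ?T)" using fN by (intro card_mono)
  then have n: "card (SS k) \<le> card (dawg_nodes ?T)" by (simp only: card_image[OF injS])
  define f where "f = (\<lambda>Z. (eq_class_b ?T (butlast Z), last Z, eq_class_b ?T Z))"
  have injE: "inj_on f (SS k)"
  proof (rule inj_onI)
    fix x y assume "x \<in> SS k" "y \<in> SS k" "f x = f y"
    then show "x = y" using injS unfolding f_def inj_on_def by simp
  qed
  have ne: "\<And>Y. Y \<in> SS k \<Longrightarrow> Y \<noteq> []" unfolding SS_def by auto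
  have "f ` SS k \<subseteq> dawg_edges ?T"
  proof
    fix e assume "e \<in> f ` SS k"
    then obtain Z where Z: "Z \<in> SS k" "e = f Z" by auto
    have Zd: "Z = butlast Z @ [last Z]" using ne[OF Z(1)] by simp
    have b: "butlast Z \<in> Substr_b ?T" using butlast_Substr sub Z(1) ne[OF Z(1)] by blast
    have "Z \<in> Substr_b ?T" using sub Z(1) by blast
    then have "(eq_class_b ?T (butlast Z), last Z, eq_class_b ?T (butlast Z @ [last Z])) \<in> dawg_edges ?T"
      unfolding dawg_edges_def using b Zd \<open>Z \<in> Substr_b ?T\<close> by (metis (mono_tags, lifting) mem_Collect_eq)
    then show "e \<in> dawg_edges ?T" using Z(2) Zd unfolding f_def by metis
  qed
  moreover have fE: "finite (dawg_edges ?T)" by (rule finite_subset[OF edges_sub finite_imageI[OF fS]])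
  ultimately have "card (f ` SS k) \<le> card (dawg_edges ?T)" by (intro card_mono)
  then have e: "card (SS k) \<le> card (dawg_edges ?T)" by (simp only: card_image[OF injE])
  have c: "card ?T \<le> 3 * (k+1)" using TT_card by blast
  then have "real (card ?T) \<le> real (3 * (k+1))" by (simp only: of_nat_le_iff)
  then have c': "real (card ?T) \<le> 3 * (real k + 1)" by simp
  have "1/16 * real (card ?T)^2 \<le> 1/16 * (3 * (real k + 1))^2"
    using c' by (intro mult_left_mono power_mono) auto
  also have "\<dots> = 9/16 * (real k + 1)^2" by (simp add: power2_eq_square algebra_simps)
  also have "\<dots> \<le> (real k + 1)^2" using zero_le_power2[of "real k + 1"] by linarith
  also have "\<dots> = real (card (SS k))" by (simp add: SS_card)
  finally have *: "1/16 * real (card ?T)^2 \<le> real (card (SS k))" .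
  show ?thesis using * n e by (meson of_nat_le_iff order_trans)
qed

theorem theorem5:
  shows "(\<exists>C::nat. \<forall>T. trie T \<longrightarrow>
            card (dawg_nodes T) \<le> C * (card T)^2 \<and> card (dawg_edges T) \<le> C * (card T)^2)
       \<and> (\<exists>\<Sigma>::nat set. finite \<Sigma> \<and> (\<exists>c::real. c > 0 \<and> (\<forall>N. \<exists>T.
            trie T \<and> (\<forall>w\<in>T. set w \<subseteq> \<Sigma>) \<and> card T \<ge> N \<and>
            real (card (dawg_nodes T)) \<ge> c * real (card T)^2 \<and>
            real (card (dawg_edges T)) \<ge> c * real (card T)^2)))"
proof
  show "\<exists>C::nat. \<forall>T. trie T \<longrightarrow>
            card (dawg_nodes T) \<le> C * (card T)^2 \<and> card (dawg_edges T) \<le> C * (card T)^2"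
    using upper by blast
  show "\<exists>\<Sigma>::nat set. finite \<Sigma> \<and> (\<exists>c::real. c > 0 \<and> (\<forall>N. \<exists>T.
            trie T \<and> (\<forall>w\<in>T. set w \<subseteq> \<Sigma>) \<and> card T \<ge> N \<and>
            real (card (dawg_nodes T)) \<ge> c * real (card T)^2 \<and>
            real (card (dawg_edges T)) \<ge> c * real (card T)^2))"
  proof (intro exI conjI allI)
    show "finite {0,1,2::nat}" by simp
    show "(0::real) < 1/16" by simp
    fix N
    let ?T = "TT (Suc N)"
    show "trie ?T" by (rule TT_trie)
    show "\<forall>w\<in>?T. set w \<subseteq> {0,1,2}"
    proof
      fix w assume "w \<in> ?T"
      then obtain i r where "w @ r = ww (Suc N) i" unfolding TT_def by blast
      then have "set w \<subseteq> set (ww (Suc N) i)" by (metis Un_upper1 set_append)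
      moreover have "set (ww (Suc N) i) \<subseteq> {0,1,2}" unfolding ww_def by auto
      ultimately show "set w \<subseteq> {0,1,2}" by blast
    qed
    show "N \<le> card ?T" using TT_card[of "Suc N"] by simp
    show "1/16 * real (card ?T)^2 \<le> real (card (dawg_nodes ?T))" using lower[of "Suc N"] by simp
    show "1/16 * real (card ?T)^2 \<le> real (card (dawg_edges ?T))" using lower[of "Suc N"] by simp
  qed
qed

end
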